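(* Let $A$ be a $C^*$-algebra and $J$ a norm-dense right ideal in $A$. Suppose that there exists a linear functional $\tau:J\to\mathbb{C}$ such that (i) $\tau(ab)=\tau(ba)$ for all $a,b\in J$, and (ii) if $c\in J$ and $\tau(c^*c)=0$ then $c=0$. Then $A$ is quasi-directly finite.
   Context: For $a,b$ in a ring $R$ (not necessarily unital), $a\diamond b := a+b-ab$; if $a\diamond b=0$ then $a$ is a left quasi-inverse of $b$ and $b$ a right quasi-inverse of $a$. A ring $R$ is quasi-directly finite if every element having a left quasi-inverse in $R$ also has a right quasi-inverse in $R$; an algebra is quasi-directly finite if its underlying ring is. *)

theory Defs
  imports "HOL-Analysis.Analysis"
begin

class complex_vector = real_vector +
  fixes cscale :: "complex \<Rightarrow> 'a \<Rightarrow> 'a" (infixr \<open>*\<^sub>C\<close> 75)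
  assumes cscale_add_right: "a *\<^sub>C (x + y) = a *\<^sub>C x + a *\<^sub>C y"
    and cscale_add_left: "(a + b) *\<^sub>C x = a *\<^sub>C x + b *\<^sub>C x"
    and cscale_cscale: "a *\<^sub>C (b *\<^sub>C x) = (a * b) *\<^sub>C x"
    and cscale_one: "1 *\<^sub>C x = x"
    and scaleR_cscale: "scaleR r x = complex_of_real r *\<^sub>C x"

text \<open>The underlying ring is the
  (non-unital) class ring contained in real_normed_algebra, which also
  provides the submultiplicativity of the norm.\<close>
class cstar_algebra = complex_vector + real_normed_algebra + banach +
  fixes cstar :: "'a \<Rightarrow> 'a"
  assumes norm_cscale: "norm (a *\<^sub>C x) = cmod a * norm x"
    and cscale_mult_left: "(a *\<^sub>C x) * y = a *\<^sub>C (x * y)"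
    and cscale_mult_right: "x * (a *\<^sub>C y) = a *\<^sub>C (x * y)"
    and cstar_cstar: "cstar (cstar x) = x"
    and cstar_add: "cstar (x + y) = cstar x + cstar y"
    and cstar_cscale: "cstar (a *\<^sub>C x) = cnj a *\<^sub>C cstar x"
    and cstar_mult: "cstar (x * y) = cstar y * cstar x"
    and cstar_identity: "norm (cstar x * x) = norm x ^ 2"

definition qcirc :: "'a::ring \<Rightarrow> 'a \<Rightarrow> 'a" where
  "qcirc a b = a + b - a * b"

definition quasi_directly_finite :: "'a::ring itself \<Rightarrow> bool" where
  "quasi_directly_finite _ \<longleftrightarrow>
     (\<forall>b::'a. (\<exists>a. qcirc a b = 0) \<longrightarrow> (\<exists>c. qcirc b c = 0))"

definition right_ideal :: "'a::cstar_algebra set \<Rightarrow> bool" where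
  "right_ideal J \<longleftrightarrow> 0 \<in> J \<and> (\<forall>x\<in>J. \<forall>y\<in>J. x + y \<in> J)
     \<and> (\<forall>c. \<forall>x\<in>J. c *\<^sub>C x \<in> J) \<and> (\<forall>x\<in>J. \<forall>a. x * a \<in> J)"

end

theory Submission
  imports Defs
begin


lemma qcirc_assoc: "qcirc (qcirc a b) c = qcirc a (qcirc b (c::'a::ring))"
  unfolding qcirc_def by (simp add: algebra_simps)
lemma qcirc_0l[simp]: "qcirc 0 a = (a::'a::ring)" unfolding qcirc_def by simp
lemma qcirc_0r[simp]: "qcirc a 0 = (a::'a::ring)" unfolding qcirc_def by simp

lemma qinv_unique: "qcirc l (m::'a::ring) = 0 \<Longrightarrow> qcirc m r = 0 \<Longrightarrow> l = r"
  by (metis qcirc_0l qcirc_0r qcirc_assoc)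

context begin
lemma cscale_zero: "(0::complex) *\<^sub>C (x::'a::complex_vector) = 0"
  by (metis scaleR_cscale of_real_0 scaleR_zero_left)
lemma cscale_m1: "(-1::complex) *\<^sub>C (x::'a::complex_vector) = - x"
  by (metis scaleR_cscale of_real_1 of_real_minus scaleR_minus1_left)
lemma cstar_zero: "cstar (0::'a::cstar_algebra) = 0"
  by (metis add_cancel_right_right cstar_add)
lemma cstar_minus: "cstar (- x::'a::cstar_algebra) = - cstar x"
  by (metis add.right_inverse add_eq_0_iff cstar_add cstar_zero)
lemma cstar_diff: "cstar (x - y::'a::cstar_algebra) = cstar x - cstar y"
  by (metis cstar_add cstar_minus diff_conv_add_uminus)
lemma cstar_scaleR: "cstar (r *\<^sub>R x::'a::cstar_algebra) = r *\<^sub>R cstar x"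
  by (simp add: scaleR_cscale cstar_cscale)
lemma cstar_qcirc: "cstar (qcirc x y) = qcirc (cstar y) (cstar (x::'a::cstar_algebra))"
  unfolding qcirc_def by (simp add: cstar_diff cstar_add cstar_mult algebra_simps)
lemma norm_cstar: "norm (cstar x) = norm (x::'a::cstar_algebra)"
proof -
  have le: "norm y \<le> norm (cstar y)" for y :: 'a
  proof (cases "y = 0")
    case False
    have "norm y ^ 2 \<le> norm (cstar y) * norm y"
      by (metis cstar_identity norm_mult_ineq)
    then show ?thesis using False by (simp add: power2_eq_square)
  qed simp
  show ?thesis using le[of x] le[of "cstar x"] by (simp add: cstar_cstar)
qed
end


lemma rqinv_contr:
  fixes x :: "'a::cstar_algebra"
  assumes t: "t \<ge> 0" and c: "0 \<le> c" "c < 1"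
    and bnd: "\<And>y. norm (t *\<^sub>R y + x * y) \<le> c * (1+t) * norm y"
  shows "\<exists>g. qcirc x g = 0"
proof -
  define f where "f g = inverse (1+t) *\<^sub>R (t *\<^sub>R g + x*g - x)" for g
  have "\<forall>g1 g2. dist (f g1) (f g2) \<le> c * dist g1 g2"
  proof (intro allI)
    fix g1 g2
    have "f g1 - f g2 = inverse (1+t) *\<^sub>R (t *\<^sub>R (g1 - g2) + x*(g1-g2))"
      unfolding f_def by (simp add: algebra_simps)
    hence "dist (f g1) (f g2) = inverse (1+t) * norm (t *\<^sub>R (g1 - g2) + x*(g1-g2))"
      using t by (simp add: dist_norm)
    also have "\<dots> \<le> inverse (1+t) * (c * (1+t) * norm (g1 - g2))"
      using bnd t by (intro mult_left_mono) auto
    also have "\<dots> = c * dist g1 g2" using t by (simp add: dist_norm)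
    finally show "dist (f g1) (f g2) \<le> c * dist g1 g2" .
  qed
  then obtain g where fg: "f g = g" using banach_fix_type[OF c] by blast
  hence "(1+t) *\<^sub>R (f g) = (1+t) *\<^sub>R g" by simp
  hence "t *\<^sub>R g + x*g - x = (1+t) *\<^sub>R g" using t unfolding f_def by simp
  hence "x * g - x = g" by (simp add: algebra_simps)
  hence "qcirc x g = 0" unfolding qcirc_def by (simp add: algebra_simps)
  thus ?thesis ..
qed

lemma small_rqinv:
  fixes x :: "'a::cstar_algebra"
  assumes "norm x < 1"
  shows "\<exists>g. qcirc x g = 0"
  by (rule rqinv_contr[of 0 "norm x"]) (use assms in \<open>auto simp: norm_mult_ineq\<close>)

lemma skew_bound:
  fixes w :: "'a::cstar_algebra"
  assumes sk: "cstar w = - w" and t: "t \<ge> 0"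
  shows "norm (t *\<^sub>R y + w * y) ^ 2 \<le> (t^2 + norm w ^ 2) * norm y ^ 2"
proof -
  have e: "cstar (t *\<^sub>R y + w * y) = t *\<^sub>R cstar y - cstar y * w"
    by (simp add: cstar_add cstar_scaleR cstar_mult sk)
  have "(t *\<^sub>R cstar y - cstar y * w) * (t *\<^sub>R y + w * y) = (t^2) *\<^sub>R (cstar y * y) - cstar y * (w * w * y)"
    by (simp add: algebra_simps power2_eq_square)
  hence "cstar (t *\<^sub>R y + w * y) * (t *\<^sub>R y + w * y) = (t^2) *\<^sub>R (cstar y * y) - cstar y * (w * w * y)"
    by (simp only: e)
  hence "norm (t *\<^sub>R y + w * y) ^ 2 = norm ((t^2) *\<^sub>R (cstar y * y) - cstar y * (w * w * y))"
    by (metis cstar_identity)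
  also have "\<dots> \<le> norm ((t^2) *\<^sub>R (cstar y * y)) + norm (cstar y * (w * w * y))"
    by (rule norm_triangle_ineq4)
  also have "norm ((t^2) *\<^sub>R (cstar y * y)) = t^2 * norm y ^ 2"
    by (simp add: cstar_identity)
  also have "norm (cstar y * (w * w * y)) \<le> norm y * (norm w * norm w * norm y)"
  proof -
    have 1: "norm (cstar y * (w * w * y)) \<le> norm (cstar y) * norm (w * w * y)" by (rule norm_mult_ineq)
    have 2: "norm (w * w * y) \<le> norm (w * w) * norm y" by (rule norm_mult_ineq)
    have 3: "norm (w * w) \<le> norm w * norm w" by (rule norm_mult_ineq)
    have "norm (w * w * y) \<le> norm w * norm w * norm y"
      using 2 3 by (meson mult_right_mono norm_ge_zero order_trans)
    hence "norm (cstar y) * norm (w * w * y) \<le> norm y * (norm w * norm w * norm y)"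
      unfolding norm_cstar by (rule mult_left_mono) simp
    thus ?thesis using 1 by (rule order_trans[rotated])
  qed
  finally show ?thesis by (simp add: algebra_simps power2_eq_square)
qed



lemma skew_rqinv:
  fixes w :: "'a::cstar_algebra"
  assumes sk: "cstar w = - w"
  shows "\<exists>g. qcirc w g = 0"
proof -
  define t where "t = norm w ^ 2"
  define c where "c = sqrt (t^2 + norm w ^ 2) / (1+t)"
  have t0: "t \<ge> 0" by (simp add: t_def)
  have "t^2 + norm w ^ 2 < (1+t)^2" by (simp add: t_def power2_eq_square algebra_simps add_pos_nonneg)
  hence "sqrt (t^2 + norm w ^ 2) < 1 + t"
    using t0 by (metis abs_of_nonneg add_nonneg_nonneg real_sqrt_abs real_sqrt_less_iff zero_le_one)
  hence c1: "c < 1" using t0 by (simp add: c_def)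
  have c0: "0 \<le> c" using t0 by (simp add: c_def)
  show ?thesis
  proof (rule rqinv_contr[OF t0 c0 c1])
    fix y
    have "norm (t *\<^sub>R y + w * y) ^ 2 \<le> (t^2 + norm w ^ 2) * norm y ^ 2"
      by (rule skew_bound[OF sk t0])
    hence "norm (t *\<^sub>R y + w * y) \<le> sqrt ((t^2 + norm w ^ 2) * norm y ^ 2)"
      by (simp add: real_le_rsqrt)
    also have "\<dots> = sqrt (t^2 + norm w ^ 2) * norm y" by (simp add: real_sqrt_mult)
    also have "\<dots> = c * (1+t) * norm y" using t0 by (simp add: c_def)
    finally show "norm (t *\<^sub>R y + w * y) \<le> c * (1 + t) * norm y" .
  qed
qed

lemma lqinv_via_star:
  fixes x :: "'a::cstar_algebra"
  assumes "qcirc (cstar x) g = 0"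
  shows "qcirc (cstar g) x = 0"
  using arg_cong[OF assms, of cstar] by (simp add: cstar_qcirc cstar_cstar cstar_zero)

lemma qinv_commute:
  fixes x m g :: "'a::ring"
  assumes xm: "x * m = m * x" and r: "qcirc m g = 0" and l: "qcirc g m = 0"
  shows "x * g = g * x"
proof -
  have "x * g - g * x = (x * g - g * x) - (x - g * x) * (m + g - m*g) + (g + m - g*m) * (x - x * g)"
    using r l unfolding qcirc_def by simp
  also have "\<dots> = (m*x - x*m) + (x*m - m*x)*g + g*(x*m - m*x) - g*(x*m - m*x)*g"
    by (simp add: algebra_simps)
  also have "\<dots> = 0" unfolding xm by simp
  finally show ?thesis by simp
qed



lemma idem_zero:
  fixes J :: "'a::cstar_algebra set" and \<tau> :: "'a \<Rightarrow> complex"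
  assumes RI: "right_ideal J"
    and tr: "\<forall>a\<in>J. \<forall>b\<in>J. \<tau> (a * b) = \<tau> (b * a)"
    and fa: "\<forall>c\<in>J. cstar c * c \<in> J \<and> \<tau> (cstar c * c) = 0 \<longrightarrow> c = 0"
    and pJ: "p \<in> J" and pp: "p * p = p" and tp: "\<tau> p = 0"
  shows "p = 0"
proof -
  define P where "P = cstar p"
  define w where "w = p - P"
  define k where "k = w * w"
  have PP: "P * P = P" unfolding P_def by (metis cstar_mult pp)
  have skw: "cstar w = - w" unfolding w_def P_def by (simp add: cstar_diff cstar_cstar)
  have skw2: "cstar (- w) = - (- w)" by (simp add: cstar_minus skw)
  obtain r1 where r1: "qcirc w r1 = 0" using skew_rqinv[OF skw] by blast
  obtain r2 where r2: "qcirc (- w) r2 = 0" using skew_rqinv[OF skw2] by blast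
  have kq: "k = qcirc w (- w)" unfolding k_def qcirc_def by simp
  define g where "g = qcirc r2 r1"
  have kg: "qcirc k g = 0" unfolding kq g_def
    by (metis qcirc_assoc r1 r2 qcirc_0l)
  have ks: "cstar k = k" unfolding k_def by (simp add: cstar_mult skw)
  have "qcirc (cstar g) k = 0" using lqinv_via_star[of k g] kg ks by simp
  hence gs: "cstar g = g" using qinv_unique kg by blast
  have gk: "qcirc g k = 0" using \<open>qcirc (cstar g) k = 0\<close> gs by simp
  have k_exp: "k = p - p * P - P * p + P"
    unfolding k_def w_def by (simp add: algebra_simps pp PP)
  have pp2: "p * (p * x) = p * x" for x by (metis mult.assoc pp)
  have PP2: "P * (P * x) = P * x" for x by (metis mult.assoc PP)
  have pk: "p * k = k * p" unfolding k_exp by (simp add: algebra_simps pp PP pp2 PP2)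
  have Pk: "P * k = k * P" unfolding k_exp by (simp add: algebra_simps pp PP pp2 PP2)
  have pg: "p * g = g * p" by (rule qinv_commute[OF pk kg gk])
  have Pg: "P * g = g * P" by (rule qinv_commute[OF Pk kg gk])
  define q where "q = p * (P - P * g)"
  have qJ: "q \<in> J" using RI pJ unfolding right_ideal_def q_def by blast
  have pPp: "p * P * p = p - p * k" unfolding k_exp by (simp add: algebra_simps pp PP pp2 PP2)
  have kg': "k * g = k + g" using kg unfolding qcirc_def by (simp add: algebra_simps)
  have "q * p = p * P * p - p * P * p * g"
    unfolding q_def by (simp add: algebra_simps pg mult.assoc)
  also have "\<dots> = p - p * (k + g - k * g)" unfolding pPp by (simp add: algebra_simps)
  also have "\<dots> = p" by (simp add: kg')
  finally have qp: "q * p = p" .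
  have pq: "p * q = q" unfolding q_def by (simp add: pp2)
  have qq: "q * q = q" unfolding q_def
    by (metis mult.assoc q_def qp)
  have qs: "cstar q = q"
  proof -
    have "cstar q = (p - g * p) * P" unfolding q_def
      by (simp add: cstar_mult cstar_diff P_def cstar_cstar gs)
    also have "\<dots> = q" unfolding q_def
      by (simp add: algebra_simps) (metis Pg pg mult.assoc)
    finally show ?thesis .
  qed
  have "\<tau> q = \<tau> (p * q)" by (simp add: pq)
  also have "\<dots> = \<tau> (q * p)" using tr pJ qJ by blast
  also have "\<dots> = 0" by (simp add: qp tp)
  finally have "\<tau> (cstar q * q) = 0" by (simp add: qs qq)
  moreover have "cstar q * q \<in> J" by (simp add: qs qq qJ)
  ultimately have "q = 0" using fa qJ by blast
  thus ?thesis using qp by simp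
qed



theorem proposition2p9:
  fixes J :: "'a::cstar_algebra set" and \<tau> :: "'a \<Rightarrow> complex"
  assumes "right_ideal J"
    and "closure J = UNIV"
    and "\<forall>x\<in>J. \<forall>y\<in>J. \<tau> (x + y) = \<tau> x + \<tau> y"
    and "\<forall>c. \<forall>x\<in>J. \<tau> (c *\<^sub>C x) = c * \<tau> x"
    and "\<forall>a\<in>J. \<forall>b\<in>J. \<tau> (a * b) = \<tau> (b * a)"
    and "\<forall>c\<in>J. cstar c * c \<in> J \<and> \<tau> (cstar c * c) = 0 \<longrightarrow> c = 0"
  shows "quasi_directly_finite TYPE('a)"
proof -
  note RI = assms(1)
  have J0: "0 \<in> J" and Jadd: "\<And>x y. x \<in> J \<Longrightarrow> y \<in> J \<Longrightarrow> x + y \<in> J"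
    and Jsc: "\<And>c x. x \<in> J \<Longrightarrow> c *\<^sub>C x \<in> J" and Jmul: "\<And>x z. x \<in> J \<Longrightarrow> x * z \<in> J"
    using RI unfolding right_ideal_def by blast+
  have Jneg: "x \<in> J \<Longrightarrow> - x \<in> J" for x using Jsc[of x "-1"] by (simp add: cscale_m1)
  have Jdiff: "x \<in> J \<Longrightarrow> y \<in> J \<Longrightarrow> x - y \<in> J" for x y
    by (simp only: diff_conv_add_uminus) (intro Jadd Jneg)
  have tdiff: "x \<in> J \<Longrightarrow> y \<in> J \<Longrightarrow> \<tau> (x - y) = \<tau> x - \<tau> y" for x y
  proof -
    assume xy: "x \<in> J" "y \<in> J"
    have "\<tau> (x + (-1) *\<^sub>C y) = \<tau> x + (-1) * \<tau> y"
      using assms(3,4) xy Jsc by simp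
    thus ?thesis by (simp add: cscale_m1)
  qed
  show ?thesis unfolding quasi_directly_finite_def
  proof (intro allI impI)
    fix b :: 'a
    assume "\<exists>a. qcirc a b = 0"
    then obtain a where ab: "qcirc a b = 0" by blast
    define N where "N = 1 + norm b"
    have N1: "N \<ge> 1" by (simp add: N_def)
    have "a \<in> closure J" using assms(2) by simp
    then obtain a' where a'J: "a' \<in> J" and da: "dist a' a < 1 / (4 * N)"
    proof -
      have "(0::real) < 1 / (4 * N)" using N1 by simp
      thus ?thesis using that \<open>a \<in> closure J\<close> unfolding closure_approachable by blast
    qed
    define \<delta> where "\<delta> = a' - a"
    have nd: "norm \<delta> < 1 / (4 * N)" using da by (simp add: \<delta>_def dist_norm)
    have ndN: "norm \<delta> * N < 1/4" using nd N1 by (simp add: field_simps)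
    define x where "x = \<delta> - \<delta> * b"
    have "norm x \<le> norm \<delta> + norm (\<delta> * b)" unfolding x_def by (rule norm_triangle_ineq4)
    also have "\<dots> \<le> norm \<delta> + norm \<delta> * norm b" by (simp add: norm_mult_ineq)
    also have "\<dots> = norm \<delta> * N" by (simp add: N_def algebra_simps)
    finally have nx: "norm x < 1/4" using ndN by linarith
    obtain h where xh: "qcirc x h = 0" using small_rqinv[of x] nx by auto
    have "h = x * h - x" using xh unfolding qcirc_def by (simp add: algebra_simps)
    hence "norm h \<le> norm (x * h) + norm x" by (metis norm_triangle_ineq4)
    also have "\<dots> \<le> norm x * norm h + norm x" by (simp add: norm_mult_ineq)
    finally have "norm h \<le> norm x * norm h + norm x" .
    moreover have "norm x * norm h \<le> 1/4 * norm h" using nx by (intro mult_right_mono) auto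
    ultimately have nh: "norm h \<le> 1/3" using nx by linarith
    have a'b: "qcirc a' b = x" using ab unfolding qcirc_def x_def \<delta>_def by (simp add: algebra_simps)
    define b' where "b' = qcirc b h"
    have a'b': "qcirc a' b' = 0" unfolding b'_def using a'b xh by (metis qcirc_assoc)
    have "b' = a' * b' - a'" using a'b' unfolding qcirc_def by (simp add: algebra_simps)
    moreover have "a' * b' - a' \<in> J" using a'J by (intro Jdiff Jmul)
    ultimately have b'J: "b' \<in> J" by simp
    define p where "p = qcirc b' a'"
    have pJ: "p \<in> J" unfolding p_def qcirc_def using a'J b'J by (intro Jdiff Jadd Jmul)
    have "qcirc p p = p" unfolding p_def by (metis qcirc_assoc a'b' qcirc_0l)
    hence pp: "p * p = p" unfolding qcirc_def by (simp add: algebra_simps)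
    have "p = a' * b' - b' * a'" using a'b' unfolding p_def qcirc_def by (simp add: algebra_simps)
    hence tp: "\<tau> p = 0" using tdiff Jmul a'J b'J assms(5) by simp
    have p0: "p = 0" by (rule idem_zero[OF RI assms(5) assms(6) pJ pp tp])
    define y where "y = b' * \<delta> - \<delta>"
    have b'a: "qcirc b' a = y" using p0 unfolding p_def y_def qcirc_def \<delta>_def by (simp add: algebra_simps)
    have "norm b' \<le> norm b + norm h + norm (b * h)" unfolding b'_def qcirc_def
      by (metis (no_types, lifting) add_mono norm_triangle_ineq norm_triangle_ineq4 order_trans order_refl)
    also have "\<dots> \<le> norm b + norm h + norm b * norm h" by (simp add: norm_mult_ineq)
    also have "\<dots> \<le> norm b + 1/3 + norm b * (1/3)"
      using nh by (intro add_mono mult_left_mono) auto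
    finally have nb0: "norm b' \<le> norm b + 1/3 + norm b * (1/3)" .
    have "norm b + 1/3 + norm b * (1/3) \<le> 2 * N"
      using norm_ge_zero[of b] unfolding N_def by (simp add: field_simps)
    hence nb': "norm b' \<le> 2 * N" using nb0 by linarith
    have "norm y \<le> norm (b' * \<delta>) + norm \<delta>" unfolding y_def by (rule norm_triangle_ineq4)
    also have "\<dots> \<le> norm b' * norm \<delta> + norm \<delta>" by (simp add: norm_mult_ineq)
    also have "\<dots> \<le> 2 * N * norm \<delta> + norm \<delta>" using nb' by (simp add: mult_right_mono)
    finally have "norm y \<le> 2 * (norm \<delta> * N) + norm \<delta>" by (simp add: algebra_simps)
    moreover have "norm \<delta> \<le> norm \<delta> * N" using N1 by (simp add: mult_le_cancel_left1)
    ultimately have ny: "norm y < 1" using ndN by linarith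
    obtain g0 where g0: "qcirc (cstar y) g0 = 0" using small_rqinv[of "cstar y"] ny by (auto simp: norm_cstar)
    have ky: "qcirc (cstar g0) y = 0" by (rule lqinv_via_star[OF g0])
    have "qcirc (qcirc (cstar g0) b') a = 0" using ky b'a by (simp add: qcirc_assoc)
    hence "qcirc (cstar g0) b' = b" using ab by (rule qinv_unique)
    hence "qcirc b a = 0" using ky b'a by (metis qcirc_assoc)
    thus "\<exists>c. qcirc b c = 0" ..
  qed
qed


end
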